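(* Let $n\ge1$, and for $j=1,\dots,n$ let $\hat\phi_j\in\mathbb{R}$, $\tilde\phi_j\ge 0$ and $0\le\underline{\xi}_j\le\overline{\xi}_j$. For $\mathbf{x}\in\mathbb{R}^n$, $\mathbf{x}\succeq\mathbf{0}$, define $$\mathcal{P}_{\mathrm R}(\mathbf{x})=\max_{\substack{\phi_j\in[\hat\phi_j-\tilde\phi_j,\,\hat\phi_j+\tilde\phi_j]\\ \xi_j\in[\underline\xi_j,\,\overline\xi_j]}}\operatorname{tr}\Big\{\Big(\sum_{j=1}^n x_j\xi_j\mathbf{u}(\phi_j)\mathbf{u}(\phi_j)^{\mathsf T}\Big)^{-1}\Big\}$$ (the trace being $+\infty$ when the matrix is singular), $\underline{\mathbf{R}}=\operatorname{diag}\{\underline\xi_1,\dots,\underline\xi_n\}$ and $B(\mathbf{x})=\tfrac14\,\mathcal{P}_{\mathrm R}(\mathbf{x})\cdot\mathbf{1}^{\mathsf T}\underline{\mathbf{R}}\mathbf{x}$. For a positive integer $M$, let $\vartheta_m=(2m+1)\pi/M$ for $m\in\mathcal{M}=\{0,\dots,M-1\}$, let $[\mathbf{h}_m]_j=\max_{|\epsilon|\le2\tilde\phi_j}\cos(2\hat\phi_j-\vartheta_m+\epsilon)$ and $[\mathbf{g}_m]_j=[\mathbf{h}_m]_j/\cos(\pi/M)$, and $$\underline{\mathcal{P}}_M(\mathbf{x})=\max_{m\in\mathcal{M}}\frac{4\cdot\mathbf{1}^{\mathsf T}\underline{\mathbf{R}}\mathbf{x}}{(\mathbf{1}^{\mathsf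 T}\underline{\mathbf{R}}\mathbf{x})^2-(\mathbf{h}_m^{\mathsf T}\underline{\mathbf{R}}\mathbf{x})^2},\qquad \overline{\mathcal{P}}_M(\mathbf{x})=\max_{m\in\mathcal{M}}\frac{4\cdot\mathbf{1}^{\mathsf T}\underline{\mathbf{R}}\mathbf{x}}{(\mathbf{1}^{\mathsf T}\underline{\mathbf{R}}\mathbf{x})^2-(\mathbf{g}_m^{\mathsf T}\underline{\mathbf{R}}\mathbf{x})^2}.$$ Then for any $\mathbf{x}\succeq\mathbf{0}$ with $\mathcal{P}_{\mathrm R}(\mathbf{x})<\infty$ and any $M\ge\pi\sqrt{B(\mathbf{x})}$, $$\overline{\mathcal{P}}_M(\mathbf{x})\le(1+C_M)\,\underline{\mathcal{P}}_M(\mathbf{x}),\qquad C_M=\frac{\sin^2(\pi/M)\,(B(\mathbf{x})-1)}{1-\sin^2(\pi/M)\,B(\mathbf{x})}.$$ Moreover, $C_M$ is monotonically decreasing in $M$ and $\lim_{M\to\infty}C_M/M^{-2}=\pi^2(B(\mathbf{x})-1)$.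
   Context: $\mathbf{u}(\phi)=[\cos\phi\ \ \sin\phi]^{\mathsf T}$; $\mathbf{1}$ is the all-ones vector; $\mathbf{x}\succeq\mathbf{0}$ means entrywise nonnegative. This models one agent (with one uncertainty cell) in a wireless localization network with $n$ anchors: angles $\phi_j$ known to lie in $[\hat\phi_j-\tilde\phi_j,\hat\phi_j+\tilde\phi_j]$, equivalent ranging coefficients $\xi_j$ known to lie in $[\underline\xi_j,\overline\xi_j]$, and $\mathbf{x}$ the anchor transmit power vector. *)

theory Defs
  imports "HOL-Analysis.Analysis"
begin

text \<open>Anchors are indexed by j < n (nat indices 0..n-1). Vectors in R^n are
  functions nat => real, only the values at j < n matter.\<close>

definition uvec :: "real \<Rightarrow> real^2" where
  "uvec \<phi> = vector [cos \<phi>, sin \<phi>]"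

definition outer :: "real^2 \<Rightarrow> real^2^2" where
  "outer v = (\<chi> i k. v$i * v$k)"

definition FIM :: "nat \<Rightarrow> (nat \<Rightarrow> real) \<Rightarrow> (nat \<Rightarrow> real) \<Rightarrow> (nat \<Rightarrow> real) \<Rightarrow> real^2^2" where
  "FIM n x \<xi> \<phi> = (\<Sum>j<n. (x j * \<xi> j) *\<^sub>R outer (uvec (\<phi> j)))"

definition trinv :: "real^2^2 \<Rightarrow> ereal" where
  "trinv A = (if invertible A then ereal (trace (matrix_inv A)) else \<infinity>)"

definition PR :: "nat \<Rightarrow> (nat \<Rightarrow> real) \<Rightarrow> (nat \<Rightarrow> real) \<Rightarrow> (nat \<Rightarrow> real) \<Rightarrow> (nat \<Rightarrow> real)
    \<Rightarrow> (nat \<Rightarrow> real) \<Rightarrow> ereal" where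
  "PR n phat ptil xilo xihi x =
     (SUP p \<in> {(\<phi>, \<xi>). \<forall>j<n. \<phi> j \<in> {phat j - ptil j .. phat j + ptil j}
                              \<and> \<xi> j \<in> {xilo j .. xihi j}}.
        trinv (FIM n x (snd p) (fst p)))"

definition oneRx :: "nat \<Rightarrow> (nat \<Rightarrow> real) \<Rightarrow> (nat \<Rightarrow> real) \<Rightarrow> real" where
  "oneRx n xilo x = (\<Sum>j<n. xilo j * x j)"

definition wRx :: "nat \<Rightarrow> (nat \<Rightarrow> real) \<Rightarrow> (nat \<Rightarrow> real) \<Rightarrow> (nat \<Rightarrow> real) \<Rightarrow> real" where
  "wRx n v xilo x = (\<Sum>j<n. v j * xilo j * x j)"

definition Bfun :: "nat \<Rightarrow> (nat \<Rightarrow> real) \<Rightarrow> (nat \<Rightarrow> real) \<Rightarrow> (nat \<Rightarrow> real) \<Rightarrow> (nat \<Rightarrow> real)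
    \<Rightarrow> (nat \<Rightarrow> real) \<Rightarrow> real" where
  "Bfun n phat ptil xilo xihi x =
     (1/4) * real_of_ereal (PR n phat ptil xilo xihi x) * oneRx n xilo x"

definition theta :: "nat \<Rightarrow> nat \<Rightarrow> real" where
  "theta M m = (2 * real m + 1) * pi / real M"

text \<open>[h_m]_j = max_{|eps| <= 2 ptil_j} cos(2 phat_j - theta_m + eps) (a max over a compact set).\<close>
definition hvec :: "(nat \<Rightarrow> real) \<Rightarrow> (nat \<Rightarrow> real) \<Rightarrow> nat \<Rightarrow> nat \<Rightarrow> nat \<Rightarrow> real" where
  "hvec phat ptil M m j =
     Sup ((\<lambda>e. cos (2 * phat j - theta M m + e)) ` {e. \<bar>e\<bar> \<le> 2 * ptil j})"

definition gvec :: "(nat \<Rightarrow> real) \<Rightarrow> (nat \<Rightarrow> real) \<Rightarrow> nat \<Rightarrow> nat \<Rightarrow> nat \<Rightarrow> real" where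
  "gvec phat ptil M m j = hvec phat ptil M m j / cos (pi / real M)"

definition PlowM :: "nat \<Rightarrow> (nat \<Rightarrow> real) \<Rightarrow> (nat \<Rightarrow> real) \<Rightarrow> (nat \<Rightarrow> real) \<Rightarrow> (nat \<Rightarrow> real)
    \<Rightarrow> nat \<Rightarrow> real" where
  "PlowM n phat ptil xilo x M =
     Max ((\<lambda>m. 4 * oneRx n xilo x /
                 ((oneRx n xilo x)\<^sup>2 - (wRx n (hvec phat ptil M m) xilo x)\<^sup>2)) ` {0..<M})"

definition PupM :: "nat \<Rightarrow> (nat \<Rightarrow> real) \<Rightarrow> (nat \<Rightarrow> real) \<Rightarrow> (nat \<Rightarrow> real) \<Rightarrow> (nat \<Rightarrow> real)
    \<Rightarrow> nat \<Rightarrow> real" where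
  "PupM n phat ptil xilo x M =
     Max ((\<lambda>m. 4 * oneRx n xilo x /
                 ((oneRx n xilo x)\<^sup>2 - (wRx n (gvec phat ptil M m) xilo x)\<^sup>2)) ` {0..<M})"

definition CM :: "real \<Rightarrow> nat \<Rightarrow> real" where
  "CM B M = (sin (pi / real M))\<^sup>2 * (B - 1) / (1 - (sin (pi / real M))\<^sup>2 * B)"

end

theory Submission
  imports Defs "HOL-Real_Asymp.Real_Asymp"
begin

lemma matinv_left:
  fixes A :: "'a::semiring_1^'n^'n"
  assumes "invertible A" shows "matrix_inv A ** A = mat 1"
proof -
  from assms obtain A' where "A ** A' = mat 1 \<and> A' ** A = mat 1" unfolding invertible_def by blast
  then have "A ** matrix_inv A = mat 1 \<and> matrix_inv A ** A = mat 1"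
    unfolding matrix_inv_def by (rule someI)
  then show ?thesis by blast
qed

lemma trace_inv2:
  fixes A :: "real^2^2"
  assumes d: "det A \<noteq> 0"
  shows "trace (matrix_inv A) = (A$1$1 + A$2$2) / det A"
proof -
  define Bm :: "real^2^2" where "Bm = (\<chi> i j. if i = 1 \<and> j = 1 then A$2$2 / det A else if i=1 \<and> j=2 then -A$1$2/det A
     else if i=2 \<and> j=1 then -A$2$1/det A else A$1$1/det A)"
  have d2: "A$1$1 * A$2$2 - A$1$2 * A$2$1 \<noteq> 0" using d by (simp add: det_2)
  have AB: "A ** Bm = mat 1"
    unfolding Bm_def matrix_matrix_mult_def mat_def
    using d apply (simp add: vec_eq_iff forall_2 sum_2 field_simps)
    by (simp add: det_2 algebra_simps)
  have inv: "invertible A" using d invertible_det_nz by blast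
  have "matrix_inv A = matrix_inv A ** (A ** Bm)" by (simp add: AB)
  also have "\<dots> = Bm" by (simp add: matrix_mul_assoc matinv_left[OF inv])
  finally have "matrix_inv A = Bm" .
  moreover have "trace Bm = Bm$1$1 + Bm$2$2" by (simp add: trace_def sum_2)
  moreover have "Bm$1$1 = A$2$2 / det A" "Bm$2$2 = A$1$1 / det A" unfolding Bm_def by simp_all
  ultimately show ?thesis by (simp add: add_divide_distrib)
qed

definition SX :: "nat \<Rightarrow> (nat \<Rightarrow> real) \<Rightarrow> (nat \<Rightarrow> real) \<Rightarrow> (nat \<Rightarrow> real) \<Rightarrow> real" where
  "SX n x \<xi> \<phi> = (\<Sum>j<n. (x j * \<xi> j) * cos (2 * \<phi> j))"
definition SY :: "nat \<Rightarrow> (nat \<Rightarrow> real) \<Rightarrow> (nat \<Rightarrow> real) \<Rightarrow> (nat \<Rightarrow> real) \<Rightarrow> real" where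
  "SY n x \<xi> \<phi> = (\<Sum>j<n. (x j * \<xi> j) * sin (2 * \<phi> j))"

lemma FIM_comp:
  "FIM n x \<xi> \<phi> $ i $ k = (\<Sum>j<n. (x j * \<xi> j) * (uvec (\<phi> j))$i * (uvec (\<phi> j))$k)"
  unfolding FIM_def outer_def by (simp add: mult.assoc)

lemma FIM_tr: "FIM n x \<xi> \<phi> $1$1 + FIM n x \<xi> \<phi> $2$2 = (\<Sum>j<n. x j * \<xi> j)"
  unfolding FIM_comp uvec_def sum.distrib[symmetric]
  by (simp add: distrib_left[symmetric] mult.assoc power2_eq_square[symmetric])

lemma FIM_det: "4 * det (FIM n x \<xi> \<phi>) = (\<Sum>j<n. x j * \<xi> j)^2 - (SX n x \<xi> \<phi>)^2 - (SY n x \<xi> \<phi>)^2"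
proof -
  let ?A = "FIM n x \<xi> \<phi>"
  have a: "?A$1$1 - ?A$2$2 = SX n x \<xi> \<phi>"
    unfolding FIM_comp uvec_def SX_def sum_subtractf[symmetric] cos_double
    by (intro sum.cong) (auto simp: algebra_simps power2_eq_square)
  have b: "2 * ?A$1$2 = SY n x \<xi> \<phi>"
    unfolding FIM_comp uvec_def SY_def sum_distrib_left sin_double
    by (intro sum.cong) (auto simp: algebra_simps)
  have c: "?A$2$1 = ?A$1$2" unfolding FIM_comp by (simp add: algebra_simps)
  have "4 * det ?A = (?A$1$1 + ?A$2$2)^2 - (?A$1$1 - ?A$2$2)^2 - (2 * ?A$1$2)^2"
    unfolding det_2 c by (simp add: algebra_simps power2_eq_square)
  then show ?thesis unfolding FIM_tr a b .
qed

lemma SXY_bound: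
  assumes "\<forall>j<n. x j * \<xi> j \<ge> 0"
  shows "(SX n x \<xi> \<phi>)^2 + (SY n x \<xi> \<phi>)^2 \<le> (\<Sum>j<n. x j * \<xi> j)^2"
proof -
  define z where "z = (\<Sum>j<n. complex_of_real (x j * \<xi> j) * cis (2 * \<phi> j))"
  have re: "Re z = SX n x \<xi> \<phi>" unfolding z_def SX_def by (simp add: Re_sum)
  have im: "Im z = SY n x \<xi> \<phi>" unfolding z_def SY_def by (simp add: Im_sum)
  have "cmod z \<le> (\<Sum>j<n. cmod (complex_of_real (x j * \<xi> j) * cis (2 * \<phi> j)))"
    unfolding z_def by (rule norm_sum)
  also have "\<dots> = (\<Sum>j<n. x j * \<xi> j)" using assms
    by (intro sum.cong) (auto simp: norm_mult abs_mult[symmetric] simp del: abs_mult)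
  finally have "(cmod z)^2 \<le> (\<Sum>j<n. x j * \<xi> j)^2" by (intro power_mono) auto
  then show ?thesis using cmod_power2[of z] re im by simp
qed

lemma trinv_FIM:
  assumes "det (FIM n x \<xi> \<phi>) \<noteq> 0"
  shows "trinv (FIM n x \<xi> \<phi>) = ereal (4 * (\<Sum>j<n. x j * \<xi> j) /
     ((\<Sum>j<n. x j * \<xi> j)^2 - (SX n x \<xi> \<phi>)^2 - (SY n x \<xi> \<phi>)^2))"
proof -
  have "invertible (FIM n x \<xi> \<phi>)" using assms invertible_det_nz by blast
  then have "trinv (FIM n x \<xi> \<phi>) = ereal (trace (matrix_inv (FIM n x \<xi> \<phi>)))"
    unfolding trinv_def by simp
  also have "trace (matrix_inv (FIM n x \<xi> \<phi>)) = (\<Sum>j<n. x j * \<xi> j) / det (FIM n x \<xi> \<phi>)"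
    using trace_inv2[OF assms] FIM_tr by simp
  also have "\<dots> = 4 * (\<Sum>j<n. x j * \<xi> j) / (4 * det (FIM n x \<xi> \<phi>))" by simp
  finally show ?thesis unfolding FIM_det .
qed

lemma hvec_attain:
  assumes "ptil j \<ge> 0"
  shows "\<exists>e. \<bar>e\<bar> \<le> 2 * ptil j \<and> hvec phat ptil M m j = cos (2 * phat j - theta M m + e)"
proof -
  have eq: "{e::real. \<bar>e\<bar> \<le> 2 * ptil j} = {-2*ptil j .. 2*ptil j}" by auto
  have "\<exists>e0\<in>{-2*ptil j .. 2*ptil j}. \<forall>y\<in>{-2*ptil j .. 2*ptil j}. cos (2 * phat j - theta M m + y) \<le> cos (2 * phat j - theta M m + e0)"
    using assms by (intro continuous_attains_sup) (auto intro!: continuous_intros)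
  then obtain e0 where e0: "e0 \<in> {-2*ptil j .. 2*ptil j}"
    "\<forall>y\<in>{-2*ptil j .. 2*ptil j}. cos (2 * phat j - theta M m + y) \<le> cos (2 * phat j - theta M m + e0)"
    by blast
  have "hvec phat ptil M m j = cos (2 * phat j - theta M m + e0)"
    unfolding hvec_def eq using e0 by (intro cSup_eq_maximum) auto
  then show ?thesis using e0 by (intro exI[of _ e0]) auto
qed

lemma sin_lt_x: assumes "0 < x" "x \<le> pi" shows "sin x < x"
proof -
  have s: "sin x = 2 * sin (x/2) * cos (x/2)" using sin_double[of "x/2"] by simp
  have "sin (x/2) > 0" using assms by (intro sin_gt_zero) auto
  moreover have "cos (x/2) < 1" using cos_monotone_0_pi[of 0 "x/2"] assms by auto
  moreover have "sin (x/2) \<le> x/2" using sin_x_le_x[of "x/2"] assms by simp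
  ultimately have "2 * sin (x/2) * cos (x/2) < 2 * sin (x/2)" by simp
  with s \<open>sin (x/2) \<le> x/2\<close> show ?thesis by linarith
qed

lemma lim1: "(\<lambda>M::nat. sin (pi / real M) * real M) \<longlonglongrightarrow> pi"
  by real_asymp

lemma lim2: "(\<lambda>M::nat. sin (pi / real M)) \<longlonglongrightarrow> 0"
  by real_asymp

lemma key_ineq:
  fixes S B s c h :: real
  assumes S: "S > 0" and hb: "S^2 \<le> B * (S^2 - h^2)" and hS: "h^2 < S^2" and s0: "0 \<le> s" and sB: "s * B < 1"
    and c: "c > 0" "c^2 = 1 - s"
  shows "4*S/(S^2 - (h/c)^2) \<le> (1 + s*(B-1)/(1-s*B)) * (4*S/(S^2 - h^2))"
proof -
  have d1: "S^2 - h^2 > 0" using hS by simp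
  have e1: "1 + s*(B-1)/(1-s*B) = (1-s)/(1-s*B)" using sB by (simp add: field_simps)
  have hc: "(h/c)^2 = h^2/(1-s)" using c by (simp add: power_divide)
  have s1: "1 - s > 0" using c by (metis zero_less_power)
  have "s*S^2 \<le> s*B*(S^2 - h^2)" using hb s0 by (metis mult.assoc mult_left_mono)
  then have key: "(1-s*B)*(S^2-h^2) \<le> (1-s)*S^2 - h^2" by (simp add: algebra_simps)
  have p1: "(1-s*B)*(S^2-h^2) > 0" using sB d1 by simp
  have d2: "(1-s)*S^2 - h^2 > 0" using key p1 by linarith
  have "4*S/(S^2 - (h/c)^2) = 4*S*(1-s)/((1-s)*S^2 - h^2)" using s1 unfolding hc by (simp add: field_simps)
  also have "\<dots> \<le> 4*S*(1-s)/((1-s*B)*(S^2-h^2))"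
    using S s1 p1 key by (intro divide_left_mono) auto
  also have "\<dots> = (1-s)/(1-s*B) * (4*S/(S^2 - h^2))" by (simp add: field_simps)
  finally show ?thesis unfolding e1 .
qed

lemma CM_mono_aux:
  fixes B s1 s2 :: real
  assumes "0 \<le> s2" "s2 \<le> s1" "s1 * B < 1" "B \<ge> 1"
  shows "s2*(B-1)/(1-s2*B) \<le> s1*(B-1)/(1-s1*B)"
proof -
  have p1: "1 - s1*B > 0" using assms by simp
  have "s2*B \<le> s1*B" using assms by (intro mult_right_mono) auto
  then have p2: "1 - s2*B > 0" using p1 by linarith
  have "(B-1)*(s2 - s1) \<le> 0" using assms by (intro mult_nonneg_nonpos) auto
  then have "s2*(B-1)*(1-s1*B) \<le> s1*(B-1)*(1-s2*B)" by (simp add: algebra_simps)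
  then show ?thesis using p1 p2 by (simp add: divide_simps)
qed


lemma Mfacts:
  fixes B :: real
  assumes B1: "B \<ge> 1" and M: "pi * sqrt B \<le> real M"
  shows "sin (pi / real M)^2 * B < 1" "0 < cos (pi / real M)" "0 \<le> sin (pi / real M)"
    "pi / real M \<le> pi / 2" "0 < pi / real M" "real M > 2"
proof -
  have "sqrt B \<ge> 1" using B1 by simp
  then have "pi \<le> pi * sqrt B" by simp
  then have Mpi: "real M \<ge> pi" using M by linarith
  then show M2: "real M > 2" using pi_gt3 by linarith
  show x0: "0 < pi / real M" using M2 by simp
  have x1: "pi / real M < pi / 2" using M2 pi_gt_zero by (intro divide_strict_left_mono) auto
  then show "pi / real M \<le> pi / 2" by simp
  show "0 < cos (pi / real M)" using x0 x1 by (intro cos_gt_zero_pi) auto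
  show s0: "0 \<le> sin (pi / real M)" using x0 x1 pi_gt_zero by (intro sin_ge_zero) linarith+
  have "sin (pi / real M) < pi / real M" using x0 x1 pi_gt_zero by (intro sin_lt_x) linarith+
  then have sl: "sin (pi / real M)^2 < (pi / real M)^2" using s0 by (intro power_strict_mono) auto
  have "(pi * sqrt B)^2 \<le> (real M)^2" using M B1 by (intro power_mono) auto
  then have "pi^2 * B \<le> (real M)^2" using B1 by (simp add: power_mult_distrib)
  then have le1: "(pi / real M)^2 * B \<le> 1" using M2 by (simp add: power_divide divide_simps)
  have "sin (pi / real M)^2 * B < (pi / real M)^2 * B" using sl B1 by simp
  then show "sin (pi / real M)^2 * B < 1" using le1 by linarith
qed

lemma cauchy2: "(cos t * a + sin t * b)^2 \<le> a^2 + (b::real)^2"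
proof -
  have "(cos t * a + sin t * b)^2 + (sin t * a - cos t * b)^2 = (a^2+b^2)*((sin t)^2 + (cos t)^2)"
    by algebra
  then have "(cos t * a + sin t * b)^2 + (sin t * a - cos t * b)^2 = a^2+b^2" by simp
  moreover have "(sin t * a - cos t * b)^2 \<ge> 0" by simp
  ultimately show ?thesis by linarith
qed

theorem proposition6:
  fixes n :: nat and phat ptil xilo xihi x :: "nat \<Rightarrow> real"
  assumes "n \<ge> 1"
    and "\<forall>j<n. ptil j \<ge> 0"
    and "\<forall>j<n. 0 \<le> xilo j \<and> xilo j \<le> xihi j"
    and "\<forall>j<n. x j \<ge> 0"
    and "PR n phat ptil xilo xihi x < \<infinity>"
  shows "(\<forall>M::nat. 0 < M \<longrightarrow> pi * sqrt (Bfun n phat ptil xilo xihi x) \<le> real M \<longrightarrow>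
            PupM n phat ptil xilo x M
              \<le> (1 + CM (Bfun n phat ptil xilo xihi x) M) * PlowM n phat ptil xilo x M)
       \<and> (\<forall>M1 M2::nat. 0 < M1 \<longrightarrow> pi * sqrt (Bfun n phat ptil xilo xihi x) \<le> real M1 \<longrightarrow>
            M1 \<le> M2 \<longrightarrow> CM (Bfun n phat ptil xilo xihi x) M2 \<le> CM (Bfun n phat ptil xilo xihi x) M1)
       \<and> ((\<lambda>M::nat. CM (Bfun n phat ptil xilo xihi x) M * (real M)\<^sup>2)
            \<longlonglongrightarrow> pi\<^sup>2 * (Bfun n phat ptil xilo xihi x - 1))"
proof -
  define S where "S = oneRx n xilo x"
  have Seq: "(\<Sum>j<n. x j * xilo j) = S" unfolding S_def oneRx_def by (simp add: mult.commute)
  define Rng where "Rng = {\<phi>. \<forall>j<n. \<phi> j \<in> {phat j - ptil j..phat j + ptil j}}"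
  define D where "D \<phi> = S^2 - (SX n x xilo \<phi>)^2 - (SY n x xilo \<phi>)^2" for \<phi>
  have wnn: "\<forall>j<n. x j * xilo j \<ge> 0" using assms(3,4) by simp
  have Dle: "D \<phi> \<le> S^2" for \<phi> unfolding D_def by simp
  have D0: "D \<phi> \<ge> 0" for \<phi> using SXY_bound[OF wnn, of \<phi>] unfolding D_def Seq by simp
  have K: "D \<phi> > 0 \<and> ereal (4*S/D \<phi>) \<le> PR n phat ptil xilo xihi x" if "\<phi> \<in> Rng" for \<phi>
  proof -
    have mem: "(\<phi>, xilo) \<in> {(\<phi>, \<xi>). \<forall>j<n. \<phi> j \<in> {phat j - ptil j .. phat j + ptil j}
                              \<and> \<xi> j \<in> {xilo j .. xihi j}}" using that assms(3) unfolding Rng_def by auto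
    have le: "trinv (FIM n x xilo \<phi>) \<le> PR n phat ptil xilo xihi x"
      unfolding PR_def by (rule SUP_upper2[OF mem]) simp
    have inv: "invertible (FIM n x xilo \<phi>)"
    proof (rule ccontr)
      assume "\<not> invertible (FIM n x xilo \<phi>)"
      then have "trinv (FIM n x xilo \<phi>) = \<infinity>" unfolding trinv_def by simp
      then show False using le assms(5) by simp
    qed
    have dn: "det (FIM n x xilo \<phi>) \<noteq> 0" using inv invertible_det_nz by blast
    have "4 * det (FIM n x xilo \<phi>) = D \<phi>" unfolding FIM_det D_def Seq ..
    then have Dp: "D \<phi> > 0" using dn D0[of \<phi>] by auto
    have "trinv (FIM n x xilo \<phi>) = ereal (4*S/D \<phi>)" unfolding trinv_FIM[OF dn] Seq D_def ..
    then show ?thesis using Dp le by simp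
  qed
  have phR: "phat \<in> Rng" unfolding Rng_def using assms(2) by auto
  have Sp: "S > 0"
  proof -
    have "S \<ge> 0" unfolding S_def oneRx_def using assms(3,4) by (intro sum_nonneg) auto
    moreover have "S^2 > 0" using K[OF phR] Dle[of phat] by linarith
    ultimately show ?thesis by (cases "S = 0") auto
  qed
  obtain p where PRp: "PR n phat ptil xilo xihi x = ereal p"
    using K[OF phR] assms(5) by (cases "PR n phat ptil xilo xihi x") auto
  define B where "B = Bfun n phat ptil xilo xihi x"
  have Beq: "B = p * S / 4" unfolding B_def Bfun_def PRp S_def by simp
  have BD: "S^2 \<le> B * D \<phi>" if "\<phi> \<in> Rng" for \<phi>
  proof -
    have Dp: "D \<phi> > 0" and "4*S/D \<phi> \<le> p" using K[OF that] PRp by auto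
    then have "4*S \<le> p * D \<phi>" by (simp add: pos_divide_le_eq)
    then have "S * (4*S) \<le> S * (p * D \<phi>)" using Sp by (intro mult_left_mono) auto
    then show ?thesis unfolding Beq by (simp add: power2_eq_square algebra_simps)
  qed
  have B1: "B \<ge> 1"
  proof -
    have "D phat \<le> B * D phat" using BD[OF phR] Dle[of phat] by linarith
    then show ?thesis using K[OF phR] by simp
  qed
  have hrep: "\<exists>\<phi>\<in>Rng. wRx n (hvec phat ptil M m) xilo x
       = cos (theta M m) * SX n x xilo \<phi> + sin (theta M m) * SY n x xilo \<phi>" for M m
  proof -
    have "\<forall>j. \<exists>e. j < n \<longrightarrow> (\<bar>e\<bar> \<le> 2 * ptil j \<and> hvec phat ptil M m j = cos (2 * phat j - theta M m + e))"
      using hvec_attain assms(2) by blast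
    from choice[OF this] obtain e where e: "\<forall>j. j < n \<longrightarrow> (\<bar>e j\<bar> \<le> 2 * ptil j \<and> hvec phat ptil M m j = cos (2 * phat j - theta M m + e j))"
      by blast
    define \<phi> where "\<phi> j = phat j + e j / 2" for j
    have "\<phi> \<in> Rng" unfolding Rng_def \<phi>_def using e by force
    moreover have "wRx n (hvec phat ptil M m) xilo x
       = cos (theta M m) * SX n x xilo \<phi> + sin (theta M m) * SY n x xilo \<phi>"
      unfolding wRx_def SX_def SY_def sum_distrib_left sum.distrib[symmetric]
    proof (intro sum.cong refl)
      fix j assume "j \<in> {..<n}"
      then have "hvec phat ptil M m j = cos (2 * \<phi> j - theta M m)"
        using e unfolding \<phi>_def by (simp add: algebra_simps)
      then show "hvec phat ptil M m j * xilo j * x j =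
        cos (theta M m) * (x j * xilo j * cos (2 * \<phi> j)) + sin (theta M m) * (x j * xilo j * sin (2 * \<phi> j))"
        by (simp add: cos_diff algebra_simps)
    qed
    ultimately show ?thesis by blast
  qed
  have hb: "S^2 \<le> B * (S^2 - (wRx n (hvec phat ptil M m) xilo x)^2) \<and> (wRx n (hvec phat ptil M m) xilo x)^2 < S^2" for M m
  proof -
    obtain \<phi> where ph: "\<phi> \<in> Rng" and h: "wRx n (hvec phat ptil M m) xilo x
       = cos (theta M m) * SX n x xilo \<phi> + sin (theta M m) * SY n x xilo \<phi>" using hrep by blast
    have "(wRx n (hvec phat ptil M m) xilo x)^2 \<le> (SX n x xilo \<phi>)^2 + (SY n x xilo \<phi>)^2"
      unfolding h by (rule cauchy2)
    then have d: "D \<phi> \<le> S^2 - (wRx n (hvec phat ptil M m) xilo x)^2" unfolding D_def by simp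
    have "B * D \<phi> \<le> B * (S^2 - (wRx n (hvec phat ptil M m) xilo x)^2)" using B1 d by (intro mult_left_mono) auto
    then show ?thesis using BD[OF ph] K[OF ph] d by linarith
  qed
  have P1: "PupM n phat ptil xilo x M \<le> (1 + CM B M) * PlowM n phat ptil xilo x M"
    if M0: "0 < M" and MB: "pi * sqrt B \<le> real M" for M
  proof -
    note mf = Mfacts[OF B1 MB]
    define s where "s = sin (pi / real M)^2"
    define c where "c = cos (pi / real M)"
    have c2: "c^2 = 1 - s" unfolding c_def s_def using sin_cos_squared_add[of "pi / real M"] by linarith
    have sB: "s * B < 1" using mf unfolding s_def by simp
    have s0: "0 \<le> s" unfolding s_def by simp
    have cp: "c > 0" using mf unfolding c_def by simp
    have C0: "0 \<le> CM B M" unfolding CM_def s_def[symmetric] using sB s0 B1 by (intro divide_nonneg_nonneg) auto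
    have gw: "wRx n (gvec phat ptil M m) xilo x = wRx n (hvec phat ptil M m) xilo x / c" for m
      unfolding wRx_def gvec_def c_def sum_divide_distrib by (intro sum.cong) auto
    let ?th = "\<lambda>m. 4 * oneRx n xilo x / ((oneRx n xilo x)\<^sup>2 - (wRx n (hvec phat ptil M m) xilo x)\<^sup>2)"
    let ?tg = "\<lambda>m. 4 * oneRx n xilo x / ((oneRx n xilo x)\<^sup>2 - (wRx n (gvec phat ptil M m) xilo x)\<^sup>2)"
    have fin: "finite (?th ` {0..<M})" "?th ` {0..<M} \<noteq> {}" using M0 by auto
    have "?tg m \<le> (1 + CM B M) * PlowM n phat ptil xilo x M" if "m \<in> {0..<M}" for m
    proof -
      have "?tg m \<le> (1 + CM B M) * ?th m"
        unfolding gw S_def[symmetric] CM_def s_def[symmetric]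
        using key_ineq[OF Sp _ _ s0 sB cp c2] hb by blast
      also have "\<dots> \<le> (1 + CM B M) * PlowM n phat ptil xilo x M"
        unfolding PlowM_def using C0 that fin by (intro mult_left_mono Max_ge) auto
      finally show ?thesis .
    qed
    then show ?thesis unfolding PupM_def using fin M0 by (subst Max_le_iff) auto
  qed
  have P2: "CM B M2 \<le> CM B M1" if "0 < M1" "pi * sqrt B \<le> real M1" "M1 \<le> M2" for M1 M2
  proof -
    note mf = Mfacts[OF B1 that(2)]
    have M2p: "real M1 \<le> real M2" using that by simp
    have xle: "pi / real M2 \<le> pi / real M1" using mf M2p by (intro divide_left_mono) auto
    have x2p: "0 < pi / real M2" using mf M2p by simp
    have ss: "sin (pi / real M2) \<le> sin (pi / real M1)"
      using xle x2p mf pi_gt_zero by (intro sin_monotone_2pi_le) linarith+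
    have s2: "0 \<le> sin (pi / real M2)" using x2p xle mf pi_gt_zero by (intro sin_ge_zero) linarith+
    have "sin (pi / real M2)^2 \<le> sin (pi / real M1)^2" using ss s2 by (intro power_mono) auto
    then show ?thesis unfolding CM_def using mf B1 by (intro CM_mono_aux) auto
  qed
  have P3: "(\<lambda>M::nat. CM B M * (real M)\<^sup>2) \<longlonglongrightarrow> pi\<^sup>2 * (B - 1)"
  proof -
    have eq: "CM B M * (real M)\<^sup>2 = (sin (pi / real M) * real M)^2 * (B - 1) / (1 - sin (pi / real M)^2 * B)" for M
      unfolding CM_def by (simp add: power_mult_distrib)
    have "(\<lambda>M::nat. (sin (pi / real M) * real M)^2 * (B - 1) / (1 - sin (pi / real M)^2 * B))
       \<longlonglongrightarrow> pi^2 * (B - 1) / (1 - 0^2 * B)"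
      by (intro tendsto_intros lim1 lim2) simp
    then show ?thesis unfolding eq by simp
  qed
  show ?thesis using P1 P2 P3 unfolding B_def by blast
qed

end
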